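(* Let $n\ge1$, $\gamma>0$, let $\phi:I\to\mathbb{R}$ be a proper closed convex function on an interval $I$, let $\psi=\phi^*$, and let $\hat X\in\mathcal{U}(\mu,\nu)$ (for some probability vectors $\mu,\nu\in\mathbb{R}^n$) satisfy $\hat X_{ij}\in\operatorname{int}(\operatorname{dom}\phi)$ for all $i,j$. Then the infimum $$\inf_{C\in S_h,\ u,v\in\mathbb{R}^n} E(u,v,C):=\psi\Big(\frac{u\oplus v-C}{\gamma}\Big)-\Big\langle\frac{u\oplus v-C}{\gamma},\hat X\Big\rangle$$ is attained. Moreover, if $(u^*,v^*,C^* )$ is a minimizer and $\psi$ is twice differentiable with $\psi''>0$ at each entry of $(u^*\oplus v^*-C^* )/\gamma$, then the optimal $C^*\in S_h$ is unique.
   Context: $\mathcal{U}(\mu,\nu):=\{X\in\mathbb{R}_+^{n\times n}: X\mathbf{1}=\mu,\ X^\top\mathbf{1}=\nu\}$. $S_h:=\{C\in\mathbb{R}_+^{n\times n}: C=C^\top,\ \operatorname{diag}(C)=0\}$. $\psi:=\phi^*$ is the Fenchel conjugate; for a matrix $Z$, $\psi(Z):=\sum_{i,j}\psi(Z_{ij})$. $(u\oplus v)_{ij}:=u_i+v_j$. *)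

theory Defs
  imports "HOL-Analysis.Analysis"
begin

text \<open>A function phi defined on a set I (extended by +infinity outside I).
  Proper closed convex on an interval: I is a nonempty interval, phi is convex
  on I, and the epigraph of phi is closed.\<close>
definition proper_closed_convex_on :: "real set \<Rightarrow> (real \<Rightarrow> real) \<Rightarrow> bool" where
  "proper_closed_convex_on I phi \<longleftrightarrow>
     is_interval I \<and> I \<noteq> {} \<and> convex_on I phi \<and>
     closed {(x, t). x \<in> I \<and> phi x \<le> t}"

definition fenchel_conj :: "real set \<Rightarrow> (real \<Rightarrow> real) \<Rightarrow> real \<Rightarrow> ereal" where
  "fenchel_conj I phi y = (SUP x\<in>I. ereal (x * y - phi x))"

definition transport_plans :: "('n::finite \<Rightarrow> real) \<Rightarrow> ('n \<Rightarrow> real) \<Rightarrow> ('n \<Rightarrow> 'n \<Rightarrow> real) set" where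
  "transport_plans mu nu = {X. (\<forall>i j. 0 \<le> X i j) \<and> (\<forall>i. (\<Sum>j\<in>UNIV. X i j) = mu i)
                                \<and> (\<forall>j. (\<Sum>i\<in>UNIV. X i j) = nu j)}"

definition hollow_sym :: "('n::finite \<Rightarrow> 'n \<Rightarrow> real) set" where
  "hollow_sym = {C. (\<forall>i j. 0 \<le> C i j) \<and> (\<forall>i j. C i j = C j i) \<and> (\<forall>i. C i i = 0)}"

definition prob_vector :: "('n::finite \<Rightarrow> real) \<Rightarrow> bool" where
  "prob_vector mu \<longleftrightarrow> (\<forall>i. 0 \<le> mu i) \<and> (\<Sum>i\<in>UNIV. mu i) = 1"

definition dual_obj :: "(real \<Rightarrow> ereal) \<Rightarrow> real \<Rightarrow> ('n::finite \<Rightarrow> 'n \<Rightarrow> real)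
    \<Rightarrow> ('n \<Rightarrow> real) \<Rightarrow> ('n \<Rightarrow> real) \<Rightarrow> ('n \<Rightarrow> 'n \<Rightarrow> real) \<Rightarrow> ereal" where
  "dual_obj psi gamma Xh u v C =
     (\<Sum>i\<in>UNIV. \<Sum>j\<in>UNIV. psi ((u i + v j - C i j) / gamma))
     - ereal (\<Sum>i\<in>UNIV. \<Sum>j\<in>UNIV. ((u i + v j - C i j) / gamma) * Xh i j)"

definition twice_diff_pos_at :: "(real \<Rightarrow> ereal) \<Rightarrow> real \<Rightarrow> bool" where
  "twice_diff_pos_at psi z \<longleftrightarrow>
     (\<exists>e>0. \<exists>psi' psi''. (\<forall>y\<in>ball z e. \<bar>psi y\<bar> \<noteq> \<infinity> \<and>
          ((\<lambda>t. real_of_ereal (psi t)) has_real_derivative psi' y) (at y))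
        \<and> (psi' has_real_derivative psi'') (at z) \<and> psi'' > 0)"

end

theory Submission
  imports Defs
begin


lemma sum_not_MInfty:
  fixes f :: "'a \<Rightarrow> ereal"
  assumes "\<And>x. x \<in> S \<Longrightarrow> f x \<noteq> -\<infinity>"
  shows "sum f S \<noteq> -\<infinity>"
proof (cases "finite S")
  case True then show ?thesis using assms by (induction S rule: finite_induct) auto
qed simp

lemma sep_sup:
  fixes f :: "'s \<Rightarrow> real \<Rightarrow> real" and A :: "real set"
  assumes "finite S" "A \<noteq> {}"
    and "\<And>x. (\<forall>s\<in>S. x s \<in> A) \<Longrightarrow> (\<Sum>s\<in>S. f s (x s)) \<le> B"
  shows "(\<Sum>s\<in>S. (SUP a\<in>A. ereal (f s a))) \<le> ereal B"
  using assms
proof (induction S arbitrary: B rule: finite_induct)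
  case empty
  obtain a0 where "a0 \<in> A" using empty.prems by blast
  then show ?case using empty.prems(2)[of "\<lambda>_. a0"] by simp
next
  case (insert s S)
  have nm: "(\<Sum>t\<in>S. (SUP a\<in>A. ereal (f t a))) \<noteq> -\<infinity>"
  proof -
    have "\<forall>t\<in>S. (SUP a\<in>A. ereal (f t a)) \<noteq> -\<infinity>"
    proof
      fix t assume "t \<in> S"
      obtain a0 where "a0 \<in> A" using insert.prems by blast
      then have "ereal (f t a0) \<le> (SUP a\<in>A. ereal (f t a))" by (rule SUP_upper)
      then show "(SUP a\<in>A. ereal (f t a)) \<noteq> -\<infinity>" by auto
    qed
    then show ?thesis using insert.hyps(1) by (intro sum_not_MInfty) auto
  qed
  have key: "ereal (f s a) + (\<Sum>t\<in>S. (SUP a\<in>A. ereal (f t a))) \<le> ereal B" if a: "a \<in> A" for a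
  proof -
    have "(\<Sum>t\<in>S. (SUP a\<in>A. ereal (f t a))) \<le> ereal (B - f s a)"
    proof (rule insert.IH[OF insert.prems(1)])
      fix x assume x: "\<forall>t\<in>S. x t \<in> A"
      let ?x = "x(s := a)"
      have "\<forall>t\<in>insert s S. ?x t \<in> A" using x a by auto
      then have "(\<Sum>t\<in>insert s S. f t (?x t)) \<le> B" by (rule insert.prems(2))
      moreover have "(\<Sum>t\<in>insert s S. f t (?x t)) = f s a + (\<Sum>t\<in>S. f t (x t))"
        using insert.hyps by (simp add: sum.insert) (rule sum.cong, auto)
      ultimately show "(\<Sum>t\<in>S. f t (x t)) \<le> B - f s a" by simp
    qed
    then show ?thesis
      by (cases "(\<Sum>t\<in>S. (SUP a\<in>A. ereal (f t a)))") (auto simp: algebra_simps)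
  qed
  have "(SUP a\<in>A. ereal (f s a)) + (\<Sum>t\<in>S. (SUP a\<in>A. ereal (f t a)))
        = (SUP a\<in>A. ereal (f s a) + (\<Sum>t\<in>S. (SUP a\<in>A. ereal (f t a))))"
    using SUP_ereal_add_left[OF insert.prems(1) nm] by simp
  also have "\<dots> \<le> ereal B" using key by (rule SUP_least)
  finally show ?case using insert.hyps by simp
qed



lemma psi_lower:
  "x \<in> I \<Longrightarrow> ereal (x * y - phi x) \<le> fenchel_conj I phi y"
  unfolding fenchel_conj_def by (rule SUP_upper)

lemma psi_nm:
  "I \<noteq> {} \<Longrightarrow> fenchel_conj I phi y \<noteq> -\<infinity>"
proof -
  assume "I \<noteq> {}"
  then obtain x where "x \<in> I" by blast
  from psi_lower[OF this, of y phi] show ?thesis by auto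
qed

lemma psi_coercive:
  assumes "xh \<in> interior I"
  shows "\<exists>del>0. \<exists>K. \<forall>z. ereal (xh * z + del * \<bar>z\<bar> - K) \<le> fenchel_conj I phi z"
proof -
  obtain e where e: "e > 0" "ball xh e \<subseteq> I" using assms mem_interior by blast
  define del where "del = e / 2"
  have p: "xh + del \<in> I" "xh - del \<in> I" using e unfolding del_def by (auto simp: dist_real_def)
  define K where "K = max (phi (xh + del)) (phi (xh - del))"
  have "ereal (xh * z + del * \<bar>z\<bar> - K) \<le> fenchel_conj I phi z" for z
  proof (cases "z \<ge> 0")
    case True
    have "xh * z + del * \<bar>z\<bar> - K \<le> (xh + del) * z - phi (xh + del)"
      using True unfolding K_def by (auto simp: algebra_simps)
    then show ?thesis using psi_lower[OF p(1), of z phi] by (meson ereal_less_eq(3) order_trans)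
  next
    case False
    have "xh * z + del * \<bar>z\<bar> - K \<le> (xh - del) * z - phi (xh - del)"
      using False unfolding K_def by (auto simp: algebra_simps)
    then show ?thesis using psi_lower[OF p(2), of z phi] by (meson ereal_less_eq(3) order_trans)
  qed
  then show ?thesis using e unfolding del_def by (metis half_gt_zero)
qed

lemma psi_convex:
  assumes "fenchel_conj I phi a = ereal ra" "fenchel_conj I phi b = ereal rb" "0 \<le> t" "t \<le> 1"
  shows "fenchel_conj I phi ((1 - t) * a + t * b) \<le> ereal ((1 - t) * ra + t * rb)"
  unfolding fenchel_conj_def
proof (rule SUP_least)
  fix x assume x: "x \<in> I"
  have "ereal (x * a - phi x) \<le> ereal ra" using psi_lower[OF x, of a phi] assms(1) by simp
  moreover have "ereal (x * b - phi x) \<le> ereal rb" using psi_lower[OF x, of b phi] assms(2) by simp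
  ultimately have h: "x * a - phi x \<le> ra" "x * b - phi x \<le> rb" by auto
  have "x * ((1 - t) * a + t * b) - phi x = (1 - t) * (x * a - phi x) + t * (x * b - phi x)"
    by (simp add: algebra_simps)
  also have "\<dots> \<le> (1 - t) * ra + t * rb"
    using h assms(3,4) by (intro add_mono mult_left_mono) auto
  finally show "ereal (x * ((1 - t) * a + t * b) - phi x) \<le> ereal ((1 - t) * ra + t * rb)" by simp
qed

lemma lim_side_const:
  fixes f :: "real \<Rightarrow> real"
  assumes "d \<noteq> 0" "(f \<longlongrightarrow> L) (at y)" "b > 0"
    and "\<And>z. 0 < (z - y) / d \<Longrightarrow> (z - y) / d < b \<Longrightarrow> f z = K"
  shows "L = K"
proof (cases "d > 0")
  case True
  have ev: "eventually (\<lambda>z. f z = K) (at_right y)"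
    unfolding eventually_at_right_field
  proof (intro exI[of _ "y + b * d"] conjI allI impI)
    show "y < y + b * d" using True assms(3) by simp
    fix z assume "y < z" "z < y + b * d"
    then show "f z = K" using True by (intro assms(4)) (auto simp: field_simps)
  qed
  have "(f \<longlongrightarrow> L) (at_right y)" using assms(2) by (rule tendsto_mono[OF at_le, rotated]) simp
  moreover have "(f \<longlongrightarrow> K) (at_right y)" using ev by (rule tendsto_eventually)
  ultimately show ?thesis using tendsto_unique trivial_limit_at_right_real by blast
next
  case False
  then have dn: "d < 0" using assms(1) by simp
  have ev: "eventually (\<lambda>z. f z = K) (at_left y)"
    unfolding eventually_at_left_field
  proof (intro exI[of _ "y + b * d"] conjI allI impI)
    show "y + b * d < y" using dn assms(3) by (simp add: mult_pos_neg)
    fix z assume "y + b * d < z" "z < y"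
    then show "f z = K" using dn by (intro assms(4)) (auto simp: field_simps)
  qed
  have "(f \<longlongrightarrow> L) (at_left y)" using assms(2) by (rule tendsto_mono[OF at_le, rotated]) simp
  moreover have "(f \<longlongrightarrow> K) (at_left y)" using ev by (rule tendsto_eventually)
  ultimately show ?thesis using tendsto_unique trivial_limit_at_left_real by blast
qed

lemma no_affine:
  assumes tw: "twice_diff_pos_at psi a" and d: "d \<noteq> 0"
    and aff: "\<forall>t\<in>{0..1}. real_of_ereal (psi (a + t * d)) = real_of_ereal (psi a) + t * c"
  shows False
proof -
  define g where "g = (\<lambda>t. real_of_ereal (psi t))"
  obtain e g' g'' where e: "e > 0" and gd: "\<forall>y\<in>ball a e. (g has_real_derivative g' y) (at y)"
    and g2: "(g' has_real_derivative g'') (at a)" and pos: "g'' > 0"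
    using tw unfolding twice_diff_pos_at_def g_def by blast
  have aff': "g (a + t * d) = g a + t * c" if "0 \<le> t" "t \<le> 1" for t
    using aff that unfolding g_def by auto
  have c1: "g' (a + t * d) = c / d" if t: "0 \<le> t" "t < 1" "\<bar>t * d\<bar> < e" for t
  proof -
    define y where "y = a + t * d"
    have "y \<in> ball a e" using t unfolding y_def by (simp add: dist_real_def)
    then have "(g has_real_derivative g' y) (at y)" using gd by blast
    then have lim: "((\<lambda>z. (g z - g y) / (z - y)) \<longlongrightarrow> g' y) (at y)"
      using has_field_derivative_iff by blast
    show ?thesis unfolding y_def[symmetric]
    proof (rule lim_side_const[OF d lim])
      show "0 < 1 - t" using t by simp
      fix z assume z: "0 < (z - y) / d" "(z - y) / d < 1 - t"
      define s where "s = (z - y) / d"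
      have zs: "z = a + (t + s) * d" using d unfolding s_def y_def by (simp add: field_simps)
      have "g z = g a + (t + s) * c" unfolding zs using z t unfolding s_def by (intro aff') auto
      moreover have "g y = g a + t * c" unfolding y_def using t by (intro aff') auto
      ultimately show "(g z - g y) / (z - y) = c / d"
        using d z unfolding s_def[symmetric] by (simp add: zs y_def field_simps)
    qed
  qed
  have ga: "g' a = c / d" using c1[of 0] e by simp
  have lim2: "((\<lambda>z. (g' z - g' a) / (z - a)) \<longlongrightarrow> g'') (at a)"
    using g2 has_field_derivative_iff by blast
  have "g'' = 0"
  proof (rule lim_side_const[OF d lim2])
    show "0 < min 1 (e / \<bar>d\<bar>)" using e d by simp
    fix z assume z: "0 < (z - a) / d" "(z - a) / d < min 1 (e / \<bar>d\<bar>)"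
    define s where "s = (z - a) / d"
    have zs: "z = a + s * d" using d unfolding s_def by (simp add: field_simps)
    have "\<bar>s * d\<bar> < e" using z d unfolding s_def[symmetric]
      by (simp add: abs_mult field_simps)
    then have "g' z = c / d" unfolding zs using z unfolding s_def[symmetric] by (intro c1) auto
    then show "(g' z - g' a) / (z - a) = 0" using ga by simp
  qed
  then show False using pos by simp
qed



lemma dbl_le:
  fixes f :: "'n::finite \<Rightarrow> 'n \<Rightarrow> real"
  assumes "\<And>i j. 0 \<le> f i j"
  shows "f i j \<le> (\<Sum>i\<in>UNIV. \<Sum>j\<in>UNIV. f i j)"
proof -
  have "f i j \<le> (\<Sum>j\<in>UNIV. f i j)" using assms by (intro member_le_sum) auto
  also have "\<dots> \<le> (\<Sum>i\<in>UNIV. \<Sum>j\<in>UNIV. f i j)"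
    using assms by (intro member_le_sum[where f = "\<lambda>i. \<Sum>j\<in>UNIV. f i j"] sum_nonneg) auto
  finally show ?thesis .
qed

lemma dbl_fin:
  fixes w :: "'n::finite \<Rightarrow> 'n \<Rightarrow> real" and psi :: "real \<Rightarrow> ereal"
  assumes "\<And>y. psi y \<noteq> -\<infinity>" "(\<Sum>i\<in>UNIV. \<Sum>j\<in>UNIV. psi (w i j)) \<noteq> \<infinity>"
  shows "\<bar>psi (w i j)\<bar> \<noteq> \<infinity>"
proof -
  have "(\<Sum>j\<in>UNIV. psi (w i j)) \<noteq> \<infinity>" using assms(2) by (auto simp: sum_Pinfty)
  then have "psi (w i j) \<noteq> \<infinity>" by (auto simp: sum_Pinfty)
  then show ?thesis using assms(1)[of "w i j"] by auto
qed

lemma dual_obj_real: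
  fixes u v :: "'n::finite \<Rightarrow> real"
  assumes "\<And>i j. \<bar>psi ((u i + v j - C i j) / gamma)\<bar> \<noteq> \<infinity>"
  shows "dual_obj psi gamma Xh u v C =
     ereal ((\<Sum>i\<in>UNIV. \<Sum>j\<in>UNIV. real_of_ereal (psi ((u i + v j - C i j) / gamma)))
     - (\<Sum>i\<in>UNIV. \<Sum>j\<in>UNIV. ((u i + v j - C i j) / gamma) * Xh i j))"
proof -
  have "psi ((u i + v j - C i j) / gamma) = ereal (real_of_ereal (psi ((u i + v j - C i j) / gamma)))"
    for i j using assms[of i j] by (simp add: ereal_real)
  then have "(\<Sum>i\<in>UNIV. \<Sum>j\<in>UNIV. psi ((u i + v j - C i j) / gamma))
     = (\<Sum>i\<in>UNIV. \<Sum>j\<in>UNIV. ereal (real_of_ereal (psi ((u i + v j - C i j) / gamma))))"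
    by presburger
  also have "\<dots> = ereal (\<Sum>i\<in>UNIV. \<Sum>j\<in>UNIV. real_of_ereal (psi ((u i + v j - C i j) / gamma)))"
    by simp
  finally show ?thesis unfolding dual_obj_def by simp
qed



lemma uniq:
  fixes u v u' v' :: "'n::finite \<Rightarrow> real"
  assumes I: "I \<noteq> {}" and g: "gamma > 0"
    and C: "C \<in> hollow_sym" and C': "C' \<in> hollow_sym"
    and mn: "\<forall>u'' v'' C''. C'' \<in> hollow_sym \<longrightarrow>
        dual_obj (fenchel_conj I phi) gamma Xh u v C \<le> dual_obj (fenchel_conj I phi) gamma Xh u'' v'' C''"
    and mn': "\<forall>u'' v'' C''. C'' \<in> hollow_sym \<longrightarrow>
        dual_obj (fenchel_conj I phi) gamma Xh u' v' C' \<le> dual_obj (fenchel_conj I phi) gamma Xh u'' v'' C''"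
    and tw: "\<forall>i j. twice_diff_pos_at (fenchel_conj I phi) ((u i + v j - C i j) / gamma)"
  shows "C' = C"
proof -
  define psi where "psi = fenchel_conj I phi"
  define pr where "pr = (\<lambda>y. real_of_ereal (psi y))"
  define E where "E = dual_obj psi gamma Xh"
  define a where "a = (\<lambda>i j. (u i + v j - C i j) / gamma)"
  define b where "b = (\<lambda>i j. (u' i + v' j - C' i j) / gamma)"
  have nm: "\<And>y. psi y \<noteq> -\<infinity>" unfolding psi_def using psi_nm[OF I] by blast
  have fa: "\<bar>psi (a i j)\<bar> \<noteq> \<infinity>" for i j
    using tw unfolding twice_diff_pos_at_def psi_def a_def by (metis centre_in_ball)
  have eq: "E u v C = E u' v' C'"
    using mn[rule_format, OF C', of u' v'] mn'[rule_format, OF C, of u v] unfolding E_def psi_def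
    by (rule antisym)
  have Ea: "E u v C = ereal ((\<Sum>i\<in>UNIV. \<Sum>j\<in>UNIV. pr (a i j)) - (\<Sum>i\<in>UNIV. \<Sum>j\<in>UNIV. a i j * Xh i j))"
    unfolding E_def pr_def a_def by (rule dual_obj_real) (use fa a_def in auto)
  have "(\<Sum>i\<in>UNIV. \<Sum>j\<in>UNIV. psi (b i j)) \<noteq> \<infinity>"
  proof
    assume "(\<Sum>i\<in>UNIV. \<Sum>j\<in>UNIV. psi (b i j)) = \<infinity>"
    then have "E u' v' C' = \<infinity>" unfolding E_def dual_obj_def b_def by simp
    then show False using eq Ea by simp
  qed
  then have fb: "\<bar>psi (b i j)\<bar> \<noteq> \<infinity>" for i j by (intro dbl_fin[of psi b] nm)
  have Eb: "E u' v' C' = ereal ((\<Sum>i\<in>UNIV. \<Sum>j\<in>UNIV. pr (b i j)) - (\<Sum>i\<in>UNIV. \<Sum>j\<in>UNIV. b i j * Xh i j))"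
    unfolding E_def pr_def b_def by (rule dual_obj_real) (use fb b_def in auto)
  define m where "m = (\<Sum>i\<in>UNIV. \<Sum>j\<in>UNIV. pr (a i j)) - (\<Sum>i\<in>UNIV. \<Sum>j\<in>UNIV. a i j * Xh i j)"
  have mb: "m = (\<Sum>i\<in>UNIV. \<Sum>j\<in>UNIV. pr (b i j)) - (\<Sum>i\<in>UNIV. \<Sum>j\<in>UNIV. b i j * Xh i j)"
    using eq Ea Eb unfolding m_def by simp
  have affine: "pr ((1 - t) * a i j + t * b i j) = (1 - t) * pr (a i j) + t * pr (b i j)"
    if t: "0 \<le> t" "t \<le> 1" for t i j
  proof -
    define ut where "ut = (\<lambda>k. (1 - t) * u k + t * u' k)"
    define vt where "vt = (\<lambda>k. (1 - t) * v k + t * v' k)"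
    define Ct where "Ct = (\<lambda>k l. (1 - t) * C k l + t * C' k l)"
    have Ct: "Ct \<in> hollow_sym" using C C' t unfolding hollow_sym_def Ct_def by auto
    have zt: "(ut k + vt l - Ct k l) / gamma = (1 - t) * a k l + t * b k l" for k l
      unfolding ut_def vt_def Ct_def a_def b_def using g by (simp add: field_simps)
    have pa: "psi (a k l) = ereal (pr (a k l))" "psi (b k l) = ereal (pr (b k l))" for k l
      unfolding pr_def using fa fb by (auto simp: ereal_real)
    have cv: "psi ((1 - t) * a k l + t * b k l) \<le> ereal ((1 - t) * pr (a k l) + t * pr (b k l))" for k l
      unfolding psi_def by (rule psi_convex) (use pa t in \<open>auto simp: psi_def\<close>)
    have ft: "\<bar>psi ((ut k + vt l - Ct k l) / gamma)\<bar> \<noteq> \<infinity>" for k l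
      unfolding zt using cv[of k l] nm[of "(1 - t) * a k l + t * b k l"] by auto
    have cvr: "pr ((1 - t) * a k l + t * b k l) \<le> (1 - t) * pr (a k l) + t * pr (b k l)" for k l
    proof -
      have "psi ((1 - t) * a k l + t * b k l) = ereal (pr ((1 - t) * a k l + t * b k l))"
        unfolding pr_def using ft[of k l] unfolding zt by (simp add: ereal_real)
      then show ?thesis using cv[of k l] by simp
    qed
    have "E u v C \<le> E ut vt Ct" using mn[rule_format, OF Ct] unfolding E_def psi_def by simp
    also have "E ut vt Ct = ereal ((\<Sum>k\<in>UNIV. \<Sum>l\<in>UNIV. pr ((1 - t) * a k l + t * b k l))
        - (\<Sum>k\<in>UNIV. \<Sum>l\<in>UNIV. ((1 - t) * a k l + t * b k l) * Xh k l))"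
      unfolding E_def pr_def by (subst dual_obj_real) (use ft zt in auto)
    finally have ge: "m \<le> (\<Sum>k\<in>UNIV. \<Sum>l\<in>UNIV. pr ((1 - t) * a k l + t * b k l))
        - (\<Sum>k\<in>UNIV. \<Sum>l\<in>UNIV. ((1 - t) * a k l + t * b k l) * Xh k l)"
      using Ea unfolding m_def by simp
    define D where "D = (\<lambda>k l. (1 - t) * pr (a k l) + t * pr (b k l) - pr ((1 - t) * a k l + t * b k l))"
    have D0: "0 \<le> D k l" for k l unfolding D_def using cvr[of k l] by simp
    have lin: "(\<Sum>k\<in>UNIV. \<Sum>l\<in>UNIV. ((1 - t) * a k l + t * b k l) * Xh k l)
        = (1 - t) * (\<Sum>k\<in>UNIV. \<Sum>l\<in>UNIV. a k l * Xh k l) + t * (\<Sum>k\<in>UNIV. \<Sum>l\<in>UNIV. b k l * Xh k l)"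
      by (simp add: distrib_right sum.distrib sum_distrib_left mult.assoc)
    have sD: "(\<Sum>k\<in>UNIV. \<Sum>l\<in>UNIV. D k l) = (1 - t) * (\<Sum>k\<in>UNIV. \<Sum>l\<in>UNIV. pr (a k l))
        + t * (\<Sum>k\<in>UNIV. \<Sum>l\<in>UNIV. pr (b k l)) - (\<Sum>k\<in>UNIV. \<Sum>l\<in>UNIV. pr ((1 - t) * a k l + t * b k l))"
      unfolding D_def by (simp add: sum.distrib sum_subtractf sum_distrib_left)
    have "(\<Sum>k\<in>UNIV. \<Sum>l\<in>UNIV. D k l) \<le> 0"
    proof -
      define SA where "SA = (\<Sum>k\<in>UNIV. \<Sum>l\<in>UNIV. pr (a k l))"
      define SB where "SB = (\<Sum>k\<in>UNIV. \<Sum>l\<in>UNIV. pr (b k l))"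
      define SZ where "SZ = (\<Sum>k\<in>UNIV. \<Sum>l\<in>UNIV. pr ((1 - t) * a k l + t * b k l))"
      define LA where "LA = (\<Sum>k\<in>UNIV. \<Sum>l\<in>UNIV. a k l * Xh k l)"
      define LB where "LB = (\<Sum>k\<in>UNIV. \<Sum>l\<in>UNIV. b k l * Xh k l)"
      define LZ where "LZ = (\<Sum>k\<in>UNIV. \<Sum>l\<in>UNIV. ((1 - t) * a k l + t * b k l) * Xh k l)"
      have 1: "m \<le> SZ - LZ" using ge unfolding SZ_def LZ_def .
      have 2: "LZ = (1 - t) * LA + t * LB" using lin unfolding LZ_def LA_def LB_def .
      have 3: "(\<Sum>k\<in>UNIV. \<Sum>l\<in>UNIV. D k l) = (1 - t) * SA + t * SB - SZ"
        using sD unfolding SA_def SB_def SZ_def .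
      have 4: "SA = m + LA" "SB = m + LB" using m_def mb unfolding SA_def SB_def LA_def LB_def by auto
      have "(1 - t) * SA + t * SB = m + ((1 - t) * LA + t * LB)" unfolding 4 by (simp add: algebra_simps)
      then show ?thesis using 1 2 3 by linarith
    qed
    moreover have "D i j \<le> (\<Sum>k\<in>UNIV. \<Sum>l\<in>UNIV. D k l)" by (rule dbl_le) (rule D0)
    ultimately have "D i j \<le> 0" by linarith
    then show ?thesis using D0[of i j] unfolding D_def by simp
  qed
  have ab: "b i j = a i j" for i j
  proof (rule ccontr)
    assume ne: "b i j \<noteq> a i j"
    show False
    proof (rule no_affine[of psi "a i j" "b i j - a i j" "pr (b i j) - pr (a i j)"])
      show "twice_diff_pos_at psi (a i j)" using tw unfolding psi_def a_def by blast
      show "b i j - a i j \<noteq> 0" using ne by simp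
      show "\<forall>t\<in>{0..1}. real_of_ereal (psi (a i j + t * (b i j - a i j))) =
          real_of_ereal (psi (a i j)) + t * (pr (b i j) - pr (a i j))"
      proof
        fix t :: real assume "t \<in> {0..1}"
        then have "pr ((1 - t) * a i j + t * b i j) = (1 - t) * pr (a i j) + t * pr (b i j)"
          by (intro affine) auto
        moreover have "a i j + t * (b i j - a i j) = (1 - t) * a i j + t * b i j"
          by (simp add: algebra_simps)
        ultimately show "real_of_ereal (psi (a i j + t * (b i j - a i j))) =
          real_of_ereal (psi (a i j)) + t * (pr (b i j) - pr (a i j))"
          unfolding pr_def by (simp add: algebra_simps)
      qed
    qed
  qed
  have lin: "u' i + v' j - C' i j = u i + v j - C i j" for i j
    using ab[of i j] g unfolding a_def b_def by (simp add: field_simps)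
  show ?thesis
  proof (intro ext)
    fix i j
    have s: "C i j = C j i" "C' i j = C' j i" "C i i = 0" "C' i i = 0" "C j j = 0" "C' j j = 0"
      using C C' unfolding hollow_sym_def by auto
    show "C' i j = C i j" using lin[of i j] lin[of j i] lin[of i i] lin[of j j] s by linarith
  qed
qed



lemma ereal_le_minus_aux: "ereal s \<le> A \<Longrightarrow> ereal (s - t) \<le> A - ereal t"
  by (cases A) auto

lemma ereal_minus_le_aux: "A \<le> ereal (r + t) \<Longrightarrow> A - ereal t \<le> ereal r"
  by (cases A) auto

lemma pair_sum:
  fixes g :: "'a::finite \<times> 'b::finite \<Rightarrow> 'c::comm_monoid_add"
  shows "(\<Sum>s\<in>UNIV. g s) = (\<Sum>i\<in>UNIV. \<Sum>j\<in>UNIV. g (i, j))"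
  by (metis UNIV_Times_UNIV sum.cartesian_product')

lemma exist:
  fixes Xh :: "'n::finite \<Rightarrow> 'n \<Rightarrow> real"
  assumes I: "I \<noteq> {}" and g: "gamma > 0" and int: "\<forall>i j. Xh i j \<in> interior I"
  shows "\<exists>u v C. C \<in> hollow_sym \<and> (\<forall>u' v' C'. C' \<in> hollow_sym \<longrightarrow>
     dual_obj (fenchel_conj I phi) gamma Xh u v C \<le> dual_obj (fenchel_conj I phi) gamma Xh u' v' C')"
proof -
  define psi where "psi = fenchel_conj I phi"
  define E where "E = dual_obj psi gamma Xh"
  define Zf where "Zf = (\<lambda>(u::'n\<Rightarrow>real) (v::'n\<Rightarrow>real) (C::'n\<Rightarrow>'n\<Rightarrow>real) i j. (u i + v j - C i j) / gamma)"
  have Erep: "E u v C = (\<Sum>i\<in>UNIV. \<Sum>j\<in>UNIV. psi (Zf u v C i j)) - ereal (\<Sum>i\<in>UNIV. \<Sum>j\<in>UNIV. Zf u v C i j * Xh i j)"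
    for u v C unfolding E_def dual_obj_def Zf_def by simp
  have "\<forall>i j. \<exists>d>0. \<exists>K. \<forall>z. ereal (Xh i j * z + d * \<bar>z\<bar> - K) \<le> psi z"
    using int psi_coercive unfolding psi_def by blast
  then obtain del K where dpos: "\<And>i j. del i j > 0"
    and dk: "\<And>i j z. ereal (Xh i j * z + del i j * \<bar>z\<bar> - K i j) \<le> psi z"
    by metis
  have LB: "ereal (\<Sum>i\<in>UNIV. \<Sum>j\<in>UNIV. del i j * \<bar>Zf u v C i j\<bar> - K i j) \<le> E u v C" for u v C
  proof -
    have "ereal (\<Sum>i\<in>UNIV. \<Sum>j\<in>UNIV. Xh i j * Zf u v C i j + del i j * \<bar>Zf u v C i j\<bar> - K i j)
        \<le> (\<Sum>i\<in>UNIV. \<Sum>j\<in>UNIV. psi (Zf u v C i j))"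
      unfolding sum_ereal[symmetric] by (intro sum_mono dk)
    then have "ereal ((\<Sum>i\<in>UNIV. \<Sum>j\<in>UNIV. Xh i j * Zf u v C i j + del i j * \<bar>Zf u v C i j\<bar> - K i j)
        - (\<Sum>i\<in>UNIV. \<Sum>j\<in>UNIV. Zf u v C i j * Xh i j)) \<le> E u v C"
      unfolding Erep by (rule ereal_le_minus_aux)
    moreover have "(\<Sum>i\<in>UNIV. \<Sum>j\<in>UNIV. Xh i j * Zf u v C i j + del i j * \<bar>Zf u v C i j\<bar> - K i j)
        = (\<Sum>i\<in>UNIV. \<Sum>j\<in>UNIV. Zf u v C i j * Xh i j) + (\<Sum>i\<in>UNIV. \<Sum>j\<in>UNIV. del i j * \<bar>Zf u v C i j\<bar> - K i j)"
      by (simp add: sum.distrib[symmetric] algebra_simps)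
    ultimately show ?thesis by simp
  qed
  define FS where "FS = {E u v C | u v C. C \<in> hollow_sym}"
  define m where "m = Inf FS"
  have mle: "m \<le> E u v C" if "C \<in> hollow_sym" for u v C
    unfolding m_def FS_def using that by (intro Inf_lower) blast
  have hs0: "(\<lambda>i j. 0::real) \<in> hollow_sym" unfolding hollow_sym_def by simp
  show ?thesis
  proof (cases "m = \<infinity>")
    case True
    have "E (\<lambda>_. 0) (\<lambda>_. 0) (\<lambda>i j. 0) = \<infinity>" using mle[OF hs0, of "\<lambda>_. 0" "\<lambda>_. 0"] True by simp
    moreover have "E u' v' C' = \<infinity>" if "C' \<in> hollow_sym" for u' v' C' using mle[OF that, of u' v'] True by simp
    ultimately show ?thesis using hs0 unfolding E_def psi_def by (intro exI[of _ "\<lambda>_. 0"] exI[of _ "\<lambda>i j. 0"]) auto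
  next
    case False
    have "ereal (- (\<Sum>i\<in>UNIV. \<Sum>j\<in>UNIV. K i j)) \<le> m"
      unfolding m_def FS_def
    proof (rule Inf_greatest, clarify)
      fix u v C :: "'n \<Rightarrow> _"
      have "- (\<Sum>i\<in>UNIV. \<Sum>j\<in>UNIV. K i j) \<le> (\<Sum>i\<in>UNIV. \<Sum>j\<in>UNIV. del i j * \<bar>Zf u v C i j\<bar> - K i j)"
      proof -
        have "0 \<le> (\<Sum>i\<in>UNIV. \<Sum>j\<in>UNIV. del i j * \<bar>Zf u v C i j\<bar>)"
          using dpos by (intro sum_nonneg mult_nonneg_nonneg) (auto intro: less_imp_le)
        moreover have "(\<Sum>i\<in>UNIV. \<Sum>j\<in>UNIV. del i j * \<bar>Zf u v C i j\<bar> - K i j)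
          = (\<Sum>i\<in>UNIV. \<Sum>j\<in>UNIV. del i j * \<bar>Zf u v C i j\<bar>) - (\<Sum>i\<in>UNIV. \<Sum>j\<in>UNIV. K i j)"
          by (simp add: sum_subtractf)
        ultimately show ?thesis by linarith
      qed
      then show "ereal (- (\<Sum>i\<in>UNIV. \<Sum>j\<in>UNIV. K i j)) \<le> E u v C" using LB[of u v C] by (meson ereal_less_eq(3) order_trans)
    qed
    then obtain r where mr: "m = ereal r" using False by (cases m) auto
    have "\<forall>k::nat. \<exists>u v C. C \<in> hollow_sym \<and> E u v C < ereal (r + inverse (real (Suc k)))"
    proof
      fix k :: nat
      have "m < ereal (r + inverse (real (Suc k)))" unfolding mr by simp
      then obtain x where "x \<in> FS" "x < ereal (r + inverse (real (Suc k)))" unfolding m_def Inf_less_iff by blast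
      then show "\<exists>u v C. C \<in> hollow_sym \<and> E u v C < ereal (r + inverse (real (Suc k)))" unfolding FS_def by blast
    qed
    then obtain uk vk Ck where sC: "\<And>k. Ck k \<in> hollow_sym"
      and sE: "\<And>k. E (uk k) (vk k) (Ck k) < ereal (r + inverse (real (Suc k)))"
      by metis
    define i0 where "i0 = (undefined :: 'n)"
    define cst where "cst = (\<lambda>k. (uk k i0 - vk k i0) / 2)"
    define un where "un = (\<lambda>k i. uk k i - cst k)"
    define vn where "vn = (\<lambda>k j. vk k j + cst k)"
    define Z where "Z = (\<lambda>k. Zf (un k) (vn k) (Ck k))"
    have Zeq: "Z k = Zf (uk k) (vk k) (Ck k)" for k
      unfolding Z_def Zf_def un_def vn_def by (intro ext) (simp add: algebra_simps)
    have En: "E (un k) (vn k) (Ck k) = E (uk k) (vk k) (Ck k)" for k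
      unfolding Erep Zeq[symmetric] Z_def ..
    have sE': "E (un k) (vn k) (Ck k) < ereal (r + inverse (real (Suc k)))" for k
      using sE[of k] En[of k] by simp
    define Q where "Q = r + 1 + (\<Sum>i\<in>UNIV. \<Sum>j\<in>UNIV. K i j)"
    have sumQ: "(\<Sum>i\<in>UNIV. \<Sum>j\<in>UNIV. del i j * \<bar>Z k i j\<bar>) < Q" for k
    proof -
      have "ereal (\<Sum>i\<in>UNIV. \<Sum>j\<in>UNIV. del i j * \<bar>Z k i j\<bar> - K i j) < ereal (r + inverse (real (Suc k)))"
        using LB[of "un k" "vn k" "Ck k"] sE'[of k] unfolding Z_def by (rule le_less_trans)
      then have "(\<Sum>i\<in>UNIV. \<Sum>j\<in>UNIV. del i j * \<bar>Z k i j\<bar> - K i j) < r + inverse (real (Suc k))" by simp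
      moreover have "inverse (real (Suc k)) \<le> 1" by (simp add: inverse_le_1_iff)
      moreover have "(\<Sum>i\<in>UNIV. \<Sum>j\<in>UNIV. del i j * \<bar>Z k i j\<bar> - K i j)
          = (\<Sum>i\<in>UNIV. \<Sum>j\<in>UNIV. del i j * \<bar>Z k i j\<bar>) - (\<Sum>i\<in>UNIV. \<Sum>j\<in>UNIV. K i j)"
        by (simp add: sum_subtractf)
      ultimately show ?thesis unfolding Q_def by linarith
    qed
    have dZnn: "0 \<le> del i j * \<bar>Z k i j\<bar>" for k i j using dpos[of i j] by simp
    have Qpos: "0 < Q" using sumQ[of 0] sum_nonneg[of UNIV "\<lambda>i. \<Sum>j\<in>UNIV. del i j * \<bar>Z 0 i j\<bar>"]
        sum_nonneg dZnn by (smt (verit) sum_nonneg)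
    define Bm where "Bm = (\<Sum>i\<in>UNIV. \<Sum>j\<in>UNIV. Q / del i j)"
    have QB: "Q / del i j \<le> Bm" for i j unfolding Bm_def
      by (rule dbl_le) (use Qpos dpos in \<open>auto intro: less_imp_le\<close>)
    have Zb: "\<bar>Z k i j\<bar> \<le> Bm" for k i j
    proof -
      have "del i j * \<bar>Z k i j\<bar> \<le> (\<Sum>i\<in>UNIV. \<Sum>j\<in>UNIV. del i j * \<bar>Z k i j\<bar>)"
        by (rule dbl_le) (rule dZnn)
      then have "del i j * \<bar>Z k i j\<bar> \<le> Q" using sumQ[of k] by linarith
      then have "\<bar>Z k i j\<bar> \<le> Q / del i j" using dpos[of i j] by (simp add: field_simps)
      then show ?thesis using QB[of i j] by linarith
    qed
    have gZ: "gamma * Z k i j = un k i + vn k j - Ck k i j" for k i j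
      unfolding Z_def Zf_def using g by simp
    have Csym: "Ck k i j = Ck k j i" "Ck k i i = 0" for k i j using sC[of k] unfolding hollow_sym_def by auto
    have n0: "un k i0 = vn k i0" for k unfolding un_def vn_def cst_def by (simp add: field_simps)
    have uid: "un k i = gamma / 2 * (Z k i i + Z k i i0 - Z k i0 i)" for k i
    proof -
      have "gamma * (Z k i i + Z k i i0 - Z k i0 i) = 2 * un k i"
        unfolding distrib_left right_diff_distrib gZ using Csym(1)[of k i i0] Csym(2)[of k i] n0[of k] by simp
      then show ?thesis by (simp add: field_simps)
    qed
    have vid: "vn k i = gamma * Z k i i - un k i" for k i using gZ[of k i i] Csym(2)[of k i] by simp
    have cid: "Ck k i j = un k i + vn k j - gamma * Z k i j" for k i j using gZ[of k i j] by simp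
    have Bm0: "0 \<le> Bm" using Zb[of 0 i0 i0] by linarith
    define R where "R = 5 * gamma * Bm"
    have ub: "\<bar>un k i\<bar> \<le> 3 / 2 * gamma * Bm" for k i
    proof -
      have "\<bar>Z k i i + Z k i i0 - Z k i0 i\<bar> \<le> 3 * Bm" using Zb[of k i i] Zb[of k i i0] Zb[of k i0 i] by linarith
      then have "gamma / 2 * \<bar>Z k i i + Z k i i0 - Z k i0 i\<bar> \<le> gamma / 2 * (3 * Bm)"
        using g by (intro mult_left_mono) auto
      then show ?thesis unfolding uid using g by (simp add: abs_mult)
    qed
    have gz: "\<bar>gamma * Z k i j\<bar> \<le> gamma * Bm" for k i j
      using Zb[of k i j] g by (simp add: abs_mult)
    have vb: "\<bar>vn k i\<bar> \<le> 5 / 2 * gamma * Bm" for k i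
      using vid[of k i] ub[of k i] gz[of k i i] by linarith
    have cb: "\<bar>Ck k i j\<bar> \<le> R" for k i j
      using cid[of k i j] ub[of k i] vb[of k j] gz[of k i j] unfolding R_def by linarith
    have ubR: "\<bar>un k i\<bar> \<le> R" "\<bar>vn k i\<bar> \<le> R" for k i
      using ub[of k i] vb[of k i] g Bm0 unfolding R_def by (auto intro: order_trans mult_nonneg_nonneg)
    define P :: "nat \<Rightarrow> real ^ ('n + ('n + 'n \<times> 'n))" where
      "P = (\<lambda>k. \<chi> x. (case x of Inl i \<Rightarrow> un k i | Inr (Inl i) \<Rightarrow> vn k i | Inr (Inr (i, j)) \<Rightarrow> Ck k i j))"
    have Pb: "\<bar>P k $ x\<bar> \<le> R" for k x
      unfolding P_def using ubR cb by (auto split: sum.split)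
    have "bounded (range P)"
      unfolding bounded_iff
    proof (intro exI ballI)
      fix y assume "y \<in> range P"
      then obtain k where y: "y = P k" by blast
      have "norm y \<le> (\<Sum>x\<in>UNIV. \<bar>y $ x\<bar>)" by (rule norm_le_l1_cart)
      also have "\<dots> \<le> (\<Sum>x\<in>(UNIV :: ('n + ('n + 'n \<times> 'n)) set). R)" unfolding y by (intro sum_mono Pb)
      finally show "norm y \<le> real CARD('n + ('n + 'n \<times> 'n)) * R" by simp
    qed
    then obtain l rr where rr: "strict_mono rr" and lim: "(P \<circ> rr) \<longlonglongrightarrow> l"
      using bounded_imp_convergent_subsequence by blast
    define us where "us = (\<lambda>i. l $ Inl i)"
    define vs where "vs = (\<lambda>i. l $ Inr (Inl i))"
    define Cs where "Cs = (\<lambda>i j. l $ Inr (Inr (i, j)))"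
    have cu: "(\<lambda>n. un (rr n) i) \<longlonglongrightarrow> us i" for i
      using tendsto_vec_nth[OF lim, of "Inl i"] unfolding us_def P_def by (simp add: o_def)
    have cv: "(\<lambda>n. vn (rr n) i) \<longlonglongrightarrow> vs i" for i
      using tendsto_vec_nth[OF lim, of "Inr (Inl i)"] unfolding vs_def P_def by (simp add: o_def)
    have cc: "(\<lambda>n. Ck (rr n) i j) \<longlonglongrightarrow> Cs i j" for i j
      using tendsto_vec_nth[OF lim, of "Inr (Inr (i, j))"] unfolding Cs_def P_def by (simp add: o_def)
    have Cs: "Cs \<in> hollow_sym"
    proof -
      have "0 \<le> Cs i j" for i j
        using sC unfolding hollow_sym_def by (intro LIMSEQ_le_const[OF cc]) auto
      moreover have "Cs i j = Cs j i" for i j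
      proof -
        have "(\<lambda>n. Ck (rr n) i j) = (\<lambda>n. Ck (rr n) j i)" using Csym by auto
        then show ?thesis using cc[of i j] cc[of j i] LIMSEQ_unique by metis
      qed
      moreover have "Cs i i = 0" for i
      proof -
        have "(\<lambda>n. Ck (rr n) i i) = (\<lambda>n. 0)" using Csym by auto
        then show ?thesis using cc[of i i] LIMSEQ_unique tendsto_const by metis
      qed
      ultimately show ?thesis unfolding hollow_sym_def by auto
    qed
    define Zs where "Zs = Zf us vs Cs"
    have cZ: "(\<lambda>n. Z (rr n) i j) \<longlonglongrightarrow> Zs i j" for i j
      unfolding Z_def Zs_def Zf_def by (intro tendsto_intros cu cv cc) (use g in auto)
    have key: "(\<Sum>i\<in>UNIV. \<Sum>j\<in>UNIV. x i j * Zs i j - phi (x i j)) - (\<Sum>i\<in>UNIV. \<Sum>j\<in>UNIV. Zs i j * Xh i j) \<le> r"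
      if x: "\<And>i j. x i j \<in> I" for x
    proof -
      define h where "h = (\<lambda>k. (\<Sum>i\<in>UNIV. \<Sum>j\<in>UNIV. x i j * Z k i j - phi (x i j)) - (\<Sum>i\<in>UNIV. \<Sum>j\<in>UNIV. Z k i j * Xh i j))"
      have hb: "h k \<le> r + inverse (real (Suc k))" for k
      proof -
        have "ereal (\<Sum>i\<in>UNIV. \<Sum>j\<in>UNIV. x i j * Z k i j - phi (x i j)) \<le> (\<Sum>i\<in>UNIV. \<Sum>j\<in>UNIV. psi (Z k i j))"
          unfolding sum_ereal[symmetric] psi_def by (intro sum_mono psi_lower x)
        then have "ereal (h k) \<le> E (un k) (vn k) (Ck k)"
          unfolding h_def Erep Z_def by (rule ereal_le_minus_aux)
        then have "ereal (h k) < ereal (r + inverse (real (Suc k)))" using sE'[of k] by (rule le_less_trans)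
        then show ?thesis by simp
      qed
      have h1: "(\<lambda>n. h (rr n)) \<longlonglongrightarrow> (\<Sum>i\<in>UNIV. \<Sum>j\<in>UNIV. x i j * Zs i j - phi (x i j)) - (\<Sum>i\<in>UNIV. \<Sum>j\<in>UNIV. Zs i j * Xh i j)"
        unfolding h_def by (intro tendsto_intros cZ)
      have "(\<lambda>n. inverse (real (Suc (rr n)))) \<longlonglongrightarrow> 0"
        using LIMSEQ_subseq_LIMSEQ[OF LIMSEQ_inverse_real_of_nat rr] by (simp add: o_def)
      then have h2: "(\<lambda>n. r + inverse (real (Suc (rr n)))) \<longlonglongrightarrow> r"
        using tendsto_add[OF tendsto_const[of r]] by fastforce
      show ?thesis using LIMSEQ_le[OF h1 h2] hb by blast
    qed
    have "(\<Sum>s\<in>UNIV. (SUP a\<in>I. ereal (a * Zs (fst s) (snd s) - phi a)))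
        \<le> ereal (r + (\<Sum>i\<in>UNIV. \<Sum>j\<in>UNIV. Zs i j * Xh i j))"
    proof (rule sep_sup[OF finite I])
      fix x :: "'n \<times> 'n \<Rightarrow> real" assume "\<forall>s\<in>UNIV. x s \<in> I"
      then have "(\<Sum>i\<in>UNIV. \<Sum>j\<in>UNIV. x (i, j) * Zs i j - phi (x (i, j))) - (\<Sum>i\<in>UNIV. \<Sum>j\<in>UNIV. Zs i j * Xh i j) \<le> r"
        by (intro key) auto
      then show "(\<Sum>s\<in>UNIV. x s * Zs (fst s) (snd s) - phi (x s)) \<le> r + (\<Sum>i\<in>UNIV. \<Sum>j\<in>UNIV. Zs i j * Xh i j)"
        unfolding pair_sum by simp
    qed
    then have "(\<Sum>i\<in>UNIV. \<Sum>j\<in>UNIV. psi (Zs i j)) \<le> ereal (r + (\<Sum>i\<in>UNIV. \<Sum>j\<in>UNIV. Zs i j * Xh i j))"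
      unfolding pair_sum psi_def fenchel_conj_def by simp
    then have "E us vs Cs \<le> ereal r" unfolding Erep Zs_def[symmetric] by (rule ereal_minus_le_aux)
    then have "\<forall>u' v' C'. C' \<in> hollow_sym \<longrightarrow> E us vs Cs \<le> E u' v' C'"
      using mle mr by (metis order_trans)
    then show ?thesis using Cs unfolding E_def psi_def by blast
  qed
qed

theorem proposition7:
  fixes gamma :: real and I :: "real set" and phi :: "real \<Rightarrow> real"
    and mu nu :: "'n::finite \<Rightarrow> real" and Xh :: "'n \<Rightarrow> 'n \<Rightarrow> real"
  assumes "gamma > 0"
    and "proper_closed_convex_on I phi"
    and "prob_vector mu" and "prob_vector nu"
    and "Xh \<in> transport_plans mu nu"
    and "\<forall>i j. Xh i j \<in> interior I"
  shows "(\<exists>u v C. C \<in> hollow_sym \<and>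
           (\<forall>u' v' C'. C' \<in> hollow_sym \<longrightarrow>
              dual_obj (fenchel_conj I phi) gamma Xh u v C \<le> dual_obj (fenchel_conj I phi) gamma Xh u' v' C'))
    \<and> (\<forall>u v C. C \<in> hollow_sym \<longrightarrow>
         (\<forall>u' v' C'. C' \<in> hollow_sym \<longrightarrow>
            dual_obj (fenchel_conj I phi) gamma Xh u v C \<le> dual_obj (fenchel_conj I phi) gamma Xh u' v' C') \<longrightarrow>
         (\<forall>i j. twice_diff_pos_at (fenchel_conj I phi) ((u i + v j - C i j) / gamma)) \<longrightarrow>
         (\<forall>u' v' C'. C' \<in> hollow_sym \<longrightarrow>
            (\<forall>u'' v'' C''. C'' \<in> hollow_sym \<longrightarrow>
               dual_obj (fenchel_conj I phi) gamma Xh u' v' C' \<le> dual_obj (fenchel_conj I phi) gamma Xh u'' v'' C'')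
            \<longrightarrow> C' = C))"
proof -
  have I: "I \<noteq> {}" using assms(2) unfolding proper_closed_convex_on_def by blast
  show ?thesis
  proof (intro conjI allI impI)
    show "\<exists>u v C. C \<in> hollow_sym \<and>
           (\<forall>u' v' C'. C' \<in> hollow_sym \<longrightarrow>
              dual_obj (fenchel_conj I phi) gamma Xh u v C \<le> dual_obj (fenchel_conj I phi) gamma Xh u' v' C')"
      using exist[OF I assms(1) assms(6)] by blast
  next
    fix u v C u' v' C'
    assume "C \<in> hollow_sym"
      "\<forall>u' v' C'. C' \<in> hollow_sym \<longrightarrow>
            dual_obj (fenchel_conj I phi) gamma Xh u v C \<le> dual_obj (fenchel_conj I phi) gamma Xh u' v' C'"
      "\<forall>i j. twice_diff_pos_at (fenchel_conj I phi) ((u i + v j - C i j) / gamma)"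
      "C' \<in> hollow_sym"
      "\<forall>u'' v'' C''. C'' \<in> hollow_sym \<longrightarrow>
               dual_obj (fenchel_conj I phi) gamma Xh u' v' C' \<le> dual_obj (fenchel_conj I phi) gamma Xh u'' v'' C''"
    then show "C' = C" by (intro uniq[OF I assms(1)]) auto
  qed
qed

end
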